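(* For all $f,g\in\mathscr S(\mathbb R)$, the non-cutoff Kac operator $K(g,f)$ (see context) belongs to $\mathscr S(\mathbb R)$.
   Context: Fix $0<s<1$. A cross section is an even measurable $\beta:[-\pi/4,\pi/4]\setminus\{0\}\to[0,\infty)$, integrable on $\{\delta\le|\theta|\le\pi/4\}$ for each $\delta>0$, with $c|\theta|^{-1-2s}\le\beta(\theta)\le C|\theta|^{-1-2s}$ for $0<|\theta|<\delta_0$. For $g$ on $\mathbb R$, $\breve g(v)=\frac12(g(v)+g(-v))$. For $f,g\in\mathscr S(\mathbb R)$, $$K(g,f)(v)=\int_{|\theta|\le\pi/4}\beta(\theta)\Bigl(\int_{\mathbb R}\bigl[\breve g(v'_* )f(v')-\breve g(v_* )f(v)\bigr]dv_*\Bigr)d\theta,\quad v'=v\cos\theta-v_*\sin\theta,\ v'_*=v\sin\theta+v_*\cos\theta,$$ where the $\theta$-integral converges absolutely (equivalently, $K(g,f)(v)=\lim_{\varepsilon\to0^+}\int_{\varepsilon\le|\theta|\le\pi/4}\beta(\theta)\int_{\mathbb R}[g(v'_* )f(v')-g(v_* )f(v)]dv_*d\theta$). *)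

theory Defs
  imports "HOL-Analysis.Analysis"
begin

definition schwartz :: "(real \<Rightarrow> real) \<Rightarrow> bool" where
  "schwartz f \<longleftrightarrow>
     (\<forall>n x. ((deriv ^^ n) f) differentiable (at x)) \<and>
     (\<forall>k n. \<exists>C. \<forall>x. \<bar>x\<bar> ^ k * \<bar>(deriv ^^ n) f x\<bar> \<le> C)"

definition angle_dom :: "real set" where
  "angle_dom = {-pi/4..pi/4} - {0}"

definition cross_section :: "real \<Rightarrow> (real \<Rightarrow> real) \<Rightarrow> bool" where
  "cross_section s \<beta> \<longleftrightarrow>
     (\<forall>\<theta>\<in>angle_dom. \<beta> (-\<theta>) = \<beta> \<theta>) \<and>
     (\<lambda>\<theta>. indicator angle_dom \<theta> * \<beta> \<theta>) \<in> borel_measurable lebesgue \<and>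
     (\<forall>\<theta>\<in>angle_dom. 0 \<le> \<beta> \<theta>) \<and>
     (\<forall>\<delta>>0. set_integrable lebesgue {\<theta>. \<delta> \<le> \<bar>\<theta>\<bar> \<and> \<bar>\<theta>\<bar> \<le> pi/4} \<beta>) \<and>
     (\<exists>c C \<delta>0. 0 < c \<and> 0 < C \<and> 0 < \<delta>0 \<and>
        (\<forall>\<theta>\<in>angle_dom. \<bar>\<theta>\<bar> < \<delta>0 \<longrightarrow>
            c * \<bar>\<theta>\<bar> powr (- 1 - 2 * s) \<le> \<beta> \<theta> \<and>
            \<beta> \<theta> \<le> C * \<bar>\<theta>\<bar> powr (- 1 - 2 * s)))"

definition even_part :: "(real \<Rightarrow> real) \<Rightarrow> real \<Rightarrow> real" where
  "even_part g v = (g v + g (-v)) / 2"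

definition kac_K :: "(real \<Rightarrow> real) \<Rightarrow> (real \<Rightarrow> real) \<Rightarrow> (real \<Rightarrow> real) \<Rightarrow> real \<Rightarrow> real" where
  "kac_K \<beta> g f v =
     (LINT \<theta>:angle_dom|lebesgue. \<beta> \<theta> *
        (LINT vs|lebesgue.
            even_part g (v * sin \<theta> + vs * cos \<theta>) * f (v * cos \<theta> - vs * sin \<theta>)
          - even_part g vs * f v))"

end

theory Submission
  imports Defs "HOL-Probability.Sinc_Integral"
begin
lemma dct_at:
  fixes F :: "real \<Rightarrow> 'a \<Rightarrow> real"
  assumes meas: "\<And>t. F t \<in> borel_measurable M" "L \<in> borel_measurable M"
    and w: "integrable M w"
    and lim: "\<And>x. x \<in> space M \<Longrightarrow> ((\<lambda>t. F t x) \<longlongrightarrow> L x) (at t0 within S)"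
    and bnd: "\<And>t x. t \<in> S \<Longrightarrow> x \<in> space M \<Longrightarrow> \<bar>F t x\<bar> \<le> w x"
  shows "((\<lambda>t. integral\<^sup>L M (F t)) \<longlongrightarrow> integral\<^sup>L M L) (at t0 within S)"
  unfolding tendsto_at_iff_sequentially
proof (intro allI impI)
  fix X :: "nat \<Rightarrow> real"
  assume X: "\<forall>i. X i \<in> S - {t0}" "X \<longlonglongrightarrow> t0"
  show "((\<lambda>t. integral\<^sup>L M (F t)) \<circ> X) \<longlonglongrightarrow> integral\<^sup>L M L"
    unfolding comp_def
  proof (rule integral_dominated_convergence[where w=w])
    show "AE x in M. (\<lambda>i. F (X i) x) \<longlonglongrightarrow> L x"
    proof (rule AE_I2)
      fix x assume x: "x \<in> space M"
      have "((\<lambda>t. F t x) \<circ> X) \<longlonglongrightarrow> L x"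
        using lim[OF x] X unfolding tendsto_at_iff_sequentially by blast
      then show "(\<lambda>i. F (X i) x) \<longlonglongrightarrow> L x" by (simp add: comp_def)
    qed
    show "AE x in M. norm (F (X i) x) \<le> w x" for i
      using bnd X(1) by (auto intro!: AE_I2)
  qed (use meas w in auto)
qed

lemma DERIV_integral:
  fixes F F' :: "real \<Rightarrow> 'a \<Rightarrow> real"
  assumes int: "\<And>v. integrable M (F v)"
    and meas: "\<And>v. F' v \<in> borel_measurable M"
    and w: "integrable M w"
    and der: "\<And>x v. x \<in> space M \<Longrightarrow> ((\<lambda>v. F v x) has_real_derivative F' v x) (at v)"
    and bnd: "\<And>x v. x \<in> space M \<Longrightarrow> \<bar>F' v x\<bar> \<le> w x"
  shows "((\<lambda>v. integral\<^sup>L M (F v)) has_real_derivative integral\<^sup>L M (F' v0)) (at v0)"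
proof -
  define Q where "Q = (\<lambda>v x. (F v x - F v0 x) / (v - v0))"
  have "((\<lambda>v. integral\<^sup>L M (Q v)) \<longlongrightarrow> integral\<^sup>L M (F' v0)) (at v0 within UNIV)"
  proof (rule dct_at[where w=w])
    show "Q t \<in> borel_measurable M" for t
      unfolding Q_def using int by (intro borel_measurable_divide borel_measurable_diff) auto
    show "x \<in> space M \<Longrightarrow> ((\<lambda>t. Q t x) \<longlongrightarrow> F' v0 x) (at v0 within UNIV)" for x
      using der[of x v0] unfolding Q_def has_field_derivative_iff by simp
    show "\<bar>Q t x\<bar> \<le> w x" if "x \<in> space M" for t x
    proof (cases "t = v0")
      case True
      then show ?thesis using bnd[OF that, of 0] unfolding Q_def by auto
    next
      case False
      have "norm (F t x - F v0 x) \<le> w x * norm (t - v0)"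
        by (rule field_differentiable_bound[where S=UNIV and f'="\<lambda>v. F' v x"])
           (use der[OF that] bnd[OF that] in \<open>auto simp: has_field_derivative_at_within\<close>)
      then show ?thesis using False unfolding Q_def
        by (simp add: abs_divide pos_divide_le_eq)
    qed
  qed (use meas w in auto)
  moreover have "integral\<^sup>L M (Q v) = (integral\<^sup>L M (F v) - integral\<^sup>L M (F v0)) / (v - v0)" for v
    unfolding Q_def using int by (simp add: integral_diff)
  ultimately show ?thesis unfolding has_field_derivative_iff by simp
qed

lemma integrable_decay:
  fixes F :: "real \<Rightarrow> real"
  assumes "continuous_on UNIV F" "\<And>y. (1 + \<bar>y\<bar>)^2 * \<bar>F y\<bar> \<le> C"
  shows "integrable lborel F"
proof (rule Bochner_Integration.integrable_bound)
  have "set_integrable lborel (einterval (-\<infinity>) \<infinity>) (\<lambda>x. inverse (1 + x^2))"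
    by (rule integrable_inverse_1_plus_square)
  then have "integrable lborel (\<lambda>x. inverse (1 + x^2) :: real)"
    by (simp add: set_integrable_def)
  then show "integrable lborel (\<lambda>x. C * inverse (1 + x^2) :: real)" by simp
  show "F \<in> borel_measurable lborel"
    using assms(1) by (simp add: borel_measurable_continuous_onI)
  show "AE x in lborel. norm (F x) \<le> norm (C * inverse (1 + x^2))"
  proof (rule AE_I2)
    fix x :: real
    have C: "0 \<le> C" using assms(2)[of x] by (smt (verit) mult_nonneg_nonneg zero_le_power abs_ge_zero)
    have p: "0 < (1 + \<bar>x\<bar>)^2" by simp
    have "1 + x^2 \<le> (1 + \<bar>x\<bar>)^2" by (simp add: power2_eq_square algebra_simps)
    have "\<bar>F x\<bar> \<le> C / (1 + \<bar>x\<bar>)^2" using assms(2)[of x] p by (simp add: field_simps mult.commute)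
    also have "\<dots> \<le> C / (1 + x^2)"
      using C \<open>1 + x^2 \<le> _\<close> by (intro divide_left_mono) (auto simp: add_pos_nonneg)
    finally show "norm (F x) \<le> norm (C * inverse (1 + x^2))"
      using C by (simp add: divide_inverse add_nonneg_eq_0_iff)
  qed
qed

definition rapid :: "(real \<Rightarrow> real) \<Rightarrow> bool" where
  "rapid h \<longleftrightarrow> (\<forall>k. \<exists>C. \<forall>x. (1 + \<bar>x\<bar>)^k * \<bar>h x\<bar> \<le> C)"

lemma one_plus_pow_le: "(0::real) \<le> a \<Longrightarrow> (1 + a)^k \<le> 2^k * (1 + a^k)"
proof (cases "a \<le> 1")
  case True
  assume "0 \<le> a"
  have "(1 + a)^k \<le> 2^k" using True \<open>0 \<le> a\<close> by (intro power_mono) auto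
  also have "\<dots> \<le> 2^k * (1 + a^k)" using \<open>0 \<le> a\<close> by simp
  finally show ?thesis .
next
  case False
  assume "0 \<le> a"
  have "(1 + a)^k \<le> (2*a)^k" using False by (intro power_mono) auto
  also have "\<dots> = 2^k * a^k" by (simp add: power_mult_distrib)
  also have "\<dots> \<le> 2^k * (1 + a^k)" by simp
  finally show ?thesis .
qed

lemma schwartz_rapid:
  assumes "schwartz h" shows "rapid ((deriv^^n) h)"
  unfolding rapid_def
proof
  fix k
  obtain C0 where C0: "\<And>x. \<bar>x\<bar>^0 * \<bar>(deriv^^n) h x\<bar> \<le> C0" using assms unfolding schwartz_def by blast
  obtain Ck where Ck: "\<And>x. \<bar>x\<bar>^k * \<bar>(deriv^^n) h x\<bar> \<le> Ck" using assms unfolding schwartz_def by blast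
  show "\<exists>C. \<forall>x. (1 + \<bar>x\<bar>)^k * \<bar>(deriv^^n) h x\<bar> \<le> C"
  proof (intro exI allI)
    fix x
    have "(1 + \<bar>x\<bar>)^k * \<bar>(deriv^^n) h x\<bar> \<le> 2^k * (1 + \<bar>x\<bar>^k) * \<bar>(deriv^^n) h x\<bar>"
      by (intro mult_right_mono one_plus_pow_le) auto
    also have "\<dots> = 2^k * (\<bar>x\<bar>^0 * \<bar>(deriv^^n) h x\<bar> + \<bar>x\<bar>^k * \<bar>(deriv^^n) h x\<bar>)"
      by (simp add: algebra_simps)
    also have "\<dots> \<le> 2^k * (C0 + Ck)" using C0[of x] Ck[of x] by (intro mult_left_mono) auto
    finally show "(1 + \<bar>x\<bar>)^k * \<bar>(deriv^^n) h x\<bar> \<le> 2^k * (C0 + Ck)" .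
  qed
qed

lemma schwartz_deriv: assumes "schwartz h" shows "schwartz (deriv h)"
proof -
  have e: "\<And>n. (deriv^^n) (deriv h) = (deriv^^(Suc n)) h" by (simp only: funpow_Suc_right comp_def)
  show ?thesis using assms unfolding schwartz_def e by blast
qed

lemma schwartz_funpow: "schwartz h \<Longrightarrow> schwartz ((deriv^^n) h)"
  by (induction n) (auto intro: schwartz_deriv)

lemma schwartz_DERIV: "schwartz h \<Longrightarrow> DERIV h x :> deriv h x"
  unfolding schwartz_def using DERIV_deriv_iff_real_differentiable
  by (metis funpow_0)

lemma schwartz_cont: "schwartz h \<Longrightarrow> continuous_on UNIV h"
  by (metis DERIV_isCont continuous_at_imp_continuous_on schwartz_DERIV)

lemma rapid_bound: "rapid h \<Longrightarrow> \<exists>C. \<forall>x. (1 + \<bar>x\<bar>)^k * \<bar>h x\<bar> \<le> C"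
  unfolding rapid_def by blast

lemma rapid_bounded: "rapid h \<Longrightarrow> \<exists>C. \<forall>x. \<bar>h x\<bar> \<le> C"
  using rapid_bound[of h 0] by auto

lemma even_part_rapid:
  assumes "rapid g" shows "rapid (even_part g)"
  unfolding rapid_def
proof
  fix k
  obtain C where C: "\<And>x. (1 + \<bar>x\<bar>)^k * \<bar>g x\<bar> \<le> C" using rapid_bound[OF assms] by blast
  show "\<exists>C. \<forall>x. (1 + \<bar>x\<bar>)^k * \<bar>even_part g x\<bar> \<le> C"
  proof (intro exI allI)
    fix x
    have e: "\<bar>even_part g x\<bar> \<le> (\<bar>g x\<bar> + \<bar>g (-x)\<bar>) / 2"
      unfolding even_part_def by (simp add: abs_divide divide_right_mono abs_triangle_ineq)
    have "(1 + \<bar>x\<bar>)^k * \<bar>even_part g x\<bar> \<le> (1 + \<bar>x\<bar>)^k * ((\<bar>g x\<bar> + \<bar>g (-x)\<bar>) / 2)"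
      by (rule mult_left_mono[OF e]) simp
    also have "\<dots> = ((1 + \<bar>x\<bar>)^k * \<bar>g x\<bar> + (1 + \<bar>-x\<bar>)^k * \<bar>g (-x)\<bar>) / 2"
      by (simp add: algebra_simps)
    also have "\<dots> \<le> C" using C[of x] C[of "-x"] by simp
    finally show "(1 + \<bar>x\<bar>)^k * \<bar>even_part g x\<bar> \<le> C" .
  qed
qed

lemma even_part_even: "even_part g (-x) = even_part g x"
  unfolding even_part_def by simp

lemma even_part_cont: assumes "continuous_on UNIV g" shows "continuous_on UNIV (even_part g)"
proof -
  have "continuous_on UNIV (\<lambda>x. g (-x))"
    by (rule continuous_on_compose2[OF assms]) (auto intro: continuous_intros)
  then show ?thesis unfolding even_part_def using assms by (intro continuous_intros) auto
qed

lemma taylor2: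
  fixes S0 S1 S2 A0 A1 A2 h h1 h2 :: "real \<Rightarrow> real"
  assumes dS0: "\<And>t. \<bar>t\<bar> \<le> pi/4 \<Longrightarrow> DERIV S0 t :> S1 t"
    and dS1: "\<And>t. \<bar>t\<bar> \<le> pi/4 \<Longrightarrow> DERIV S1 t :> S2 t"
    and dA0: "\<And>t. \<bar>t\<bar> \<le> pi/4 \<Longrightarrow> DERIV A0 t :> A1 t"
    and dA1: "\<And>t. \<bar>t\<bar> \<le> pi/4 \<Longrightarrow> DERIV A1 t :> A2 t"
    and dh: "\<And>x. DERIV h x :> h1 x" and dh1: "\<And>x. DERIV h1 x :> h2 x"
    and th: "\<bar>\<theta>\<bar> \<le> pi/4"
  shows "\<exists>t. \<bar>t\<bar> \<le> pi/4 \<and> S0 \<theta> * h (A0 \<theta>) = S0 0 * h (A0 0)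
     + \<theta> * (S1 0 * h (A0 0) + S0 0 * h1 (A0 0) * A1 0)
     + \<theta>\<^sup>2 / 2 * (S2 t * h (A0 t) + 2 * S1 t * h1 (A0 t) * A1 t
          + S0 t * h2 (A0 t) * (A1 t)\<^sup>2 + S0 t * h1 (A0 t) * A2 t)"
proof (cases "\<theta> = 0")
  case True
  then show ?thesis by (intro exI[of _ 0]) auto
next
  case False
  define p0 where "p0 = (\<lambda>t. S0 t * h (A0 t))"
  define p1 where "p1 = (\<lambda>t. S1 t * h (A0 t) + S0 t * h1 (A0 t) * A1 t)"
  define p2 where "p2 = (\<lambda>t. S2 t * h (A0 t) + 2 * S1 t * h1 (A0 t) * A1 t
          + S0 t * h2 (A0 t) * (A1 t)\<^sup>2 + S0 t * h1 (A0 t) * A2 t)"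
  define diff where "diff = (\<lambda>m::nat. if m = 0 then p0 else if m = 1 then p1 else p2)"
  have d0: "DERIV p0 t :> p1 t" if "\<bar>t\<bar> \<le> pi/4" for t
  proof -
    have "DERIV (\<lambda>t. h (A0 t)) t :> h1 (A0 t) * A1 t"
      by (rule DERIV_chain2[OF dh dA0[OF that]])
    from DERIV_mult[OF dS0[OF that] this] show ?thesis
      unfolding p0_def p1_def by (rule DERIV_cong) (simp add: algebra_simps)
  qed
  have d1: "DERIV p1 t :> p2 t" if "\<bar>t\<bar> \<le> pi/4" for t
  proof -
    have c0: "DERIV (\<lambda>t. h (A0 t)) t :> h1 (A0 t) * A1 t"
      by (rule DERIV_chain2[OF dh dA0[OF that]])
    have c1: "DERIV (\<lambda>t. h1 (A0 t)) t :> h2 (A0 t) * A1 t"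
      by (rule DERIV_chain2[OF dh1 dA0[OF that]])
    from DERIV_add[OF DERIV_mult[OF dS1[OF that] c0] DERIV_mult[OF DERIV_mult[OF dS0[OF that] c1] dA1[OF that]]]
    show ?thesis
      unfolding p1_def p2_def by (rule DERIV_cong) (simp add: algebra_simps power2_eq_square)
  qed
  have "\<exists>t. (if \<theta> < 0 then \<theta> < t \<and> t < 0 else 0 < t \<and> t < \<theta>) \<and>
    p0 \<theta> = (\<Sum>m<2. (diff m 0 / fact m) * (\<theta> - 0)^m) + (diff 2 t / fact 2) * (\<theta> - 0)^2"
  proof (rule Taylor[where a="-pi/4" and b="pi/4"])
    show "diff 0 = p0" by (simp add: diff_def)
    show "\<forall>m t. m < 2 \<and> - pi / 4 \<le> t \<and> t \<le> pi / 4 \<longrightarrow> DERIV (diff m) t :> diff (Suc m) t"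
    proof (intro allI impI)
      fix m t assume a: "m < (2::nat) \<and> - pi / 4 \<le> t \<and> t \<le> pi / 4"
      then have t: "\<bar>t\<bar> \<le> pi/4" by auto
      from a have "m = 0 \<or> m = 1" by auto
      then show "DERIV (diff m) t :> diff (Suc m) t"
        using d0[OF t] d1[OF t] by (auto simp: diff_def)
    qed
  qed (use th False pi_gt_zero in auto)
  then obtain t where t: "\<bar>t\<bar> \<le> \<bar>\<theta>\<bar>"
    and eq: "p0 \<theta> = (\<Sum>m<2. (diff m 0 / fact m) * (\<theta> - 0)^m) + (diff 2 t / fact 2) * (\<theta> - 0)^2"
    by (smt (verit))
  have "(\<Sum>m<2. (diff m 0 / fact m) * (\<theta> - 0)^m) = p0 0 + p1 0 * \<theta>"
    by (simp add: diff_def numeral_2_eq_2)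
  with eq have "p0 \<theta> = p0 0 + \<theta> * p1 0 + \<theta>\<^sup>2 / 2 * p2 t"
    by (simp add: diff_def)
  then show ?thesis using t th unfolding p0_def p1_def p2_def
    by (intro exI[of _ t]) auto
qed

lemma trig_bounds:
  fixes t :: real assumes "\<bar>t\<bar> \<le> pi/4"
  shows "1/2 \<le> cos t" "cos t \<le> 1" "\<bar>sin t\<bar> \<le> cos t" "\<bar>sin t\<bar> \<le> 1"
proof -
  have c0: "0 \<le> cos t" using assms by (intro cos_ge_zero) auto
  have "0 \<le> cos (2*t)" using assms by (intro cos_ge_zero) auto
  then have sc: "(sin t)\<^sup>2 \<le> (cos t)\<^sup>2" by (simp add: cos_double)
  then show "\<bar>sin t\<bar> \<le> cos t" using c0 by (metis power2_abs power2_le_imp_le)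
  have "1/2 \<le> (cos t)\<^sup>2" using sc sin_cos_squared_add[of t] by linarith
  then have "(1/2)\<^sup>2 \<le> (cos t)\<^sup>2" by (simp add: power2_eq_square)
  then show "1/2 \<le> cos t" using c0 by (rule power2_le_imp_le)
  show "cos t \<le> 1" by simp
  show "\<bar>sin t\<bar> \<le> 1" by simp
qed

lemma p2_bound:
  fixes M R :: real
  assumes "\<bar>S0\<bar> \<le> M" "\<bar>S1\<bar> \<le> M" "\<bar>S2\<bar> \<le> M" "\<bar>A1\<bar> \<le> 4*R" "\<bar>A2\<bar> \<le> 24*R" "1 \<le> R"
  shows "\<bar>S2 * a + 2 * S1 * b * A1 + S0 * c * A1\<^sup>2 + S0 * b * A2\<bar> \<le> 48 * M * R\<^sup>2 * (\<bar>a\<bar> + \<bar>b\<bar> + \<bar>c\<bar>)"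
proof -
  have M: "0 \<le> M" using assms(1) by linarith
  have "1 * R \<le> R * R" by (rule mult_right_mono) (use assms(6) in auto)
  then have "R \<le> R * R" by simp
  then have R2: "R \<le> R\<^sup>2" "1 \<le> R\<^sup>2" unfolding power2_eq_square using assms(6) by linarith+
  have MR: "M * R \<le> M * R\<^sup>2" "M \<le> M * R\<^sup>2"
    using mult_left_mono[OF R2(1) M] mult_left_mono[OF R2(2) M] by simp_all
  have MR': "M * R * \<bar>z\<bar> \<le> M * R\<^sup>2 * \<bar>z\<bar>" "M * \<bar>z\<bar> \<le> M * R\<^sup>2 * \<bar>z\<bar>" for z
    using mult_right_mono[OF MR(1), of "\<bar>z\<bar>"] mult_right_mono[OF MR(2), of "\<bar>z\<bar>"] by simp_all
  have t1: "\<bar>S2 * a\<bar> \<le> M * R\<^sup>2 * \<bar>a\<bar>"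
  proof -
    have "\<bar>S2 * a\<bar> \<le> M * \<bar>a\<bar>" by (simp add: abs_mult assms(3) mult_right_mono)
    also have "\<dots> \<le> M * R\<^sup>2 * \<bar>a\<bar>" by (rule MR'(2))
    finally show ?thesis .
  qed
  have t2: "\<bar>2 * S1 * b * A1\<bar> \<le> 8 * M * R\<^sup>2 * \<bar>b\<bar>"
  proof -
    have "\<bar>2 * S1 * b * A1\<bar> = 2 * \<bar>S1\<bar> * \<bar>A1\<bar> * \<bar>b\<bar>" by (simp add: abs_mult)
    also have "\<dots> \<le> 2 * M * (4 * R) * \<bar>b\<bar>" using assms M
      by (intro mult_right_mono mult_mono) auto
    also have "\<dots> = 8 * (M * R * \<bar>b\<bar>)" by simp
    also have "\<dots> \<le> 8 * M * R\<^sup>2 * \<bar>b\<bar>" using MR'(1)[of b] by simp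
    finally show ?thesis .
  qed
  have t3: "\<bar>S0 * c * A1\<^sup>2\<bar> \<le> 16 * M * R\<^sup>2 * \<bar>c\<bar>"
  proof -
    have "\<bar>A1\<bar>\<^sup>2 \<le> (4*R)\<^sup>2" using assms(4) by (intro power_mono) auto
    then have "\<bar>A1\<^sup>2\<bar> \<le> (4*R)\<^sup>2" by simp
    then have "\<bar>A1\<^sup>2\<bar> \<le> 16 * R\<^sup>2" by (simp add: power_mult_distrib)
    have "\<bar>S0 * c * A1\<^sup>2\<bar> = \<bar>S0\<bar> * \<bar>A1\<^sup>2\<bar> * \<bar>c\<bar>" by (simp add: abs_mult)
    also have "\<dots> \<le> M * (16 * R\<^sup>2) * \<bar>c\<bar>" using assms M \<open>\<bar>A1\<^sup>2\<bar> \<le> 16 * R\<^sup>2\<close>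
      by (intro mult_right_mono mult_mono) auto
    finally show ?thesis by simp
  qed
  have t4: "\<bar>S0 * b * A2\<bar> \<le> 24 * M * R\<^sup>2 * \<bar>b\<bar>"
  proof -
    have "\<bar>S0 * b * A2\<bar> = \<bar>S0\<bar> * \<bar>A2\<bar> * \<bar>b\<bar>" by (simp add: abs_mult)
    also have "\<dots> \<le> M * (24 * R) * \<bar>b\<bar>" using assms M
      by (intro mult_right_mono mult_mono) auto
    also have "\<dots> = 24 * (M * R * \<bar>b\<bar>)" by simp
    also have "\<dots> \<le> 24 * M * R\<^sup>2 * \<bar>b\<bar>" using MR'(1)[of b] by simp
    finally show ?thesis .
  qed
  have "0 \<le> M * R\<^sup>2 * \<bar>a\<bar>" "0 \<le> M * R\<^sup>2 * \<bar>b\<bar>" "0 \<le> M * R\<^sup>2 * \<bar>c\<bar>" using M by auto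
  then show ?thesis using t1 t2 t3 t4 by (simp add: algebra_simps) linarith
qed

lemma weight_bound:
  fixes v a y :: real
  assumes "\<bar>v\<bar> \<le> \<bar>a\<bar> + \<bar>y\<bar>"
  shows "\<bar>v\<bar>^k * (1 + \<bar>v\<bar> + \<bar>y\<bar>)\<^sup>2 \<le> 2^(k+2) * ((1 + \<bar>a\<bar>)^(k+2) * (1 + \<bar>y\<bar>)^(k+2))"
proof -
  have "\<bar>v\<bar>^k \<le> (1 + \<bar>v\<bar> + \<bar>y\<bar>)^k" by (intro power_mono) auto
  then have "\<bar>v\<bar>^k * (1 + \<bar>v\<bar> + \<bar>y\<bar>)\<^sup>2 \<le> (1 + \<bar>v\<bar> + \<bar>y\<bar>)^k * (1 + \<bar>v\<bar> + \<bar>y\<bar>)\<^sup>2"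
    by (intro mult_right_mono) auto
  also have "\<dots> = (1 + \<bar>v\<bar> + \<bar>y\<bar>)^(k+2)" by (simp only: power_add)
  also have "\<dots> \<le> (2 * (1 + \<bar>a\<bar>) * (1 + \<bar>y\<bar>))^(k+2)"
  proof (intro power_mono)
    have "0 \<le> \<bar>a\<bar> * \<bar>y\<bar>" by simp
    moreover have "2 * (1 + \<bar>a\<bar>) * (1 + \<bar>y\<bar>) = 2 + 2*\<bar>a\<bar> + 2*\<bar>y\<bar> + 2*(\<bar>a\<bar> * \<bar>y\<bar>)"
      by (simp add: algebra_simps)
    ultimately show "1 + \<bar>v\<bar> + \<bar>y\<bar> \<le> 2 * (1 + \<bar>a\<bar>) * (1 + \<bar>y\<bar>)" using assms by linarith
  qed auto
  also have "\<dots> = 2^(k+2) * ((1 + \<bar>a\<bar>)^(k+2) * (1 + \<bar>y\<bar>)^(k+2))" by (simp only: power_mult_distrib mult.assoc)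
  finally show ?thesis .
qed

lemma pow_pred_mult: "0 < m \<Longrightarrow> (x::real) * x ^ (m - Suc 0) = x ^ m"
  by (cases m) auto

lemma dS0: assumes "cos t \<noteq> 0"
  shows "DERIV (\<lambda>t. 1 / cos t ^ m) t :> real m * sin t / cos t ^ (m+1)"
  using assms by (auto intro!: derivative_eq_intros simp: field_simps power_Suc pow_pred_mult)

lemma dS1: assumes "cos t \<noteq> 0"
  shows "DERIV (\<lambda>t. real m * sin t / cos t ^ (m+1)) t :> real m * ((cos t)\<^sup>2 + (real m + 1) * (sin t)\<^sup>2) / cos t ^ (m+2)"
  using assms by (auto intro!: derivative_eq_intros simp: field_simps power_Suc power2_eq_square pow_pred_mult)

lemma dA0: assumes "cos t \<noteq> 0"
  shows "DERIV (\<lambda>t. (v - y * sin t) / cos t) t :> (v * sin t - y) / (cos t)\<^sup>2"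
  using assms apply (auto intro!: derivative_eq_intros simp: field_simps power2_eq_square)
  by (metis distrib_left mult.right_neutral sin_cos_squared_add3)

lemma dA1: assumes "cos t \<noteq> 0"
  shows "DERIV (\<lambda>t. (v * sin t - y) / (cos t)\<^sup>2) t :> (v * (cos t)\<^sup>2 + 2 * sin t * (v * sin t - y)) / cos t ^ 3"
  using assms by (auto intro!: derivative_eq_intros simp: field_simps power2_eq_square power3_eq_cube)

lemma inv_pow_le: assumes "1/2 \<le> (c::real)" shows "1 / c^m \<le> 2^m" "0 < 1 / c^m"
proof -
  have "(1/2)^m \<le> c^m" using assms by (intro power_mono) auto
  have "0 < c" using assms by simp
  with \<open>(1/2)^m \<le> c^m\<close> have "1 / c^m \<le> 1 / (1/2)^m" by (intro divide_left_mono) auto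
  then show "1 / c^m \<le> 2^m" by (simp add: power_one_over)
  show "0 < 1 / c^m" using assms by simp
qed

lemma S_bounds:
  fixes c sn :: real and m :: nat
  assumes c: "1/2 \<le> c" "c \<le> 1" and s: "\<bar>sn\<bar> \<le> c"
  defines "M \<equiv> 2^m * (real m + 1) * (real m + 2)"
  shows "\<bar>1 / c^m\<bar> \<le> M" "\<bar>real m * sn / c^(m+1)\<bar> \<le> M"
    "\<bar>real m * (c\<^sup>2 + (real m + 1) * sn\<^sup>2) / c^(m+2)\<bar> \<le> M"
proof -
  have cp: "0 < c" using c by auto
  note I = inv_pow_le[OF c(1), of m]
  have M1: "2^m \<le> M" unfolding M_def
  proof -
    have "(2::real)^m * 1 * 1 \<le> 2^m * (real m + 1) * (real m + 2)"
      by (intro mult_mono) auto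
    then show "(2::real)^m \<le> 2^m * (real m + 1) * (real m + 2)" by simp
  qed
  show "\<bar>1 / c^m\<bar> \<le> M" using I M1 by simp
  have q: "\<bar>sn\<bar> / c \<le> 1" using s cp by simp
  have "\<bar>real m * sn / c^(m+1)\<bar> = real m * (\<bar>sn\<bar> / c) * (1 / c^m)"
    using cp by (simp add: abs_mult)
  also have "\<dots> \<le> real m * 1 * 2^m"
    using q I cp by (intro mult_mono) auto
  also have "\<dots> \<le> (real m + 1) * (real m + 2) * 2^m"
    by (intro mult_right_mono mult_mono) auto
  also have "\<dots> = M" unfolding M_def by (simp add: algebra_simps)
  finally show "\<bar>real m * sn / c^(m+1)\<bar> \<le> M" .
  have sq: "sn\<^sup>2 \<le> c\<^sup>2" using s by (metis abs_ge_zero power2_abs power_mono)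
  have q2: "(c\<^sup>2 + (real m + 1) * sn\<^sup>2) / c\<^sup>2 \<le> real m + 2"
  proof -
    have "c\<^sup>2 + (real m + 1) * sn\<^sup>2 \<le> c\<^sup>2 + (real m + 1) * c\<^sup>2"
      using sq by (intro add_left_mono mult_left_mono) auto
    also have "\<dots> = (real m + 2) * c\<^sup>2" by (simp add: algebra_simps)
    finally show ?thesis using cp by (simp add: divide_le_eq)
  qed
  have nn: "0 \<le> (c\<^sup>2 + (real m + 1) * sn\<^sup>2) / c\<^sup>2" by simp
  have "\<bar>real m * (c\<^sup>2 + (real m + 1) * sn\<^sup>2) / c^(m+2)\<bar>
      = real m * ((c\<^sup>2 + (real m + 1) * sn\<^sup>2) / c\<^sup>2) * (1 / c^m)"
    using cp by (simp add: abs_mult power_add add_nonneg_nonneg power2_eq_square)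
  also have "\<dots> \<le> real m * (real m + 2) * 2^m"
    using q2 I nn by (intro mult_mono) auto
  also have "\<dots> \<le> (real m + 1) * (real m + 2) * 2^m"
    by (intro mult_right_mono) auto
  also have "\<dots> = M" unfolding M_def by (simp add: algebra_simps)
  finally show "\<bar>real m * (c\<^sup>2 + (real m + 1) * sn\<^sup>2) / c^(m+2)\<bar> \<le> M" .
qed

lemma A_bounds:
  fixes c sn v y :: real
  assumes c: "1/2 \<le> c" "c \<le> 1" and s: "\<bar>sn\<bar> \<le> c" "\<bar>sn\<bar> \<le> 1"
  shows "\<bar>(v * sn - y) / c\<^sup>2\<bar> \<le> 4 * (1 + \<bar>v\<bar> + \<bar>y\<bar>)"
    "\<bar>(v * c\<^sup>2 + 2 * sn * (v * sn - y)) / c^3\<bar> \<le> 24 * (1 + \<bar>v\<bar> + \<bar>y\<bar>)"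
    "\<bar>v\<bar> \<le> \<bar>(v - y * sn) / c\<bar> + \<bar>y\<bar>"
proof -
  have cp: "0 < c" using c by auto
  have n1: "\<bar>v * sn - y\<bar> \<le> \<bar>v\<bar> + \<bar>y\<bar>"
  proof -
    have "\<bar>v * sn\<bar> \<le> \<bar>v\<bar>" using s(2) by (simp add: abs_mult mult_left_le)
    then show ?thesis by linarith
  qed
  have i2: "1 / c\<^sup>2 \<le> 4" and i3: "1 / c^3 \<le> 8"
    using inv_pow_le[OF c(1), of 2] inv_pow_le[OF c(1), of 3] by auto
  have "\<bar>(v * sn - y) / c\<^sup>2\<bar> = \<bar>v * sn - y\<bar> * (1 / c\<^sup>2)" by (simp add: abs_divide)
  also have "\<dots> \<le> (\<bar>v\<bar> + \<bar>y\<bar>) * 4" using n1 i2 cp by (intro mult_mono) auto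
  finally show "\<bar>(v * sn - y) / c\<^sup>2\<bar> \<le> 4 * (1 + \<bar>v\<bar> + \<bar>y\<bar>)" by simp
  have n2: "\<bar>v * c\<^sup>2 + 2 * sn * (v * sn - y)\<bar> \<le> 3 * (\<bar>v\<bar> + \<bar>y\<bar>)"
  proof -
    have "c\<^sup>2 \<le> 1" using c cp by (simp add: power_le_one)
    then have a: "\<bar>v * c\<^sup>2\<bar> \<le> \<bar>v\<bar>" by (simp add: abs_mult mult_left_le)
    have "\<bar>2 * sn * (v * sn - y)\<bar> = 2 * \<bar>sn\<bar> * \<bar>v * sn - y\<bar>" by (simp add: abs_mult)
    also have "\<dots> \<le> 2 * 1 * (\<bar>v\<bar> + \<bar>y\<bar>)" using s(2) n1 by (intro mult_mono) auto
    finally have b: "\<bar>2 * sn * (v * sn - y)\<bar> \<le> 2 * (\<bar>v\<bar> + \<bar>y\<bar>)" by simp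
    have "\<bar>v * c\<^sup>2 + 2 * sn * (v * sn - y)\<bar> \<le> \<bar>v * c\<^sup>2\<bar> + \<bar>2 * sn * (v * sn - y)\<bar>"
      by (rule abs_triangle_ineq)
    also have "\<dots> \<le> \<bar>v\<bar> + 2 * (\<bar>v\<bar> + \<bar>y\<bar>)" by (rule add_mono[OF a b])
    also have "\<dots> \<le> 3 * (\<bar>v\<bar> + \<bar>y\<bar>)" by simp
    finally show ?thesis .
  qed
  have "\<bar>(v * c\<^sup>2 + 2 * sn * (v * sn - y)) / c^3\<bar> = \<bar>v * c\<^sup>2 + 2 * sn * (v * sn - y)\<bar> * (1 / c^3)"
    using cp by (simp add: abs_divide)
  also have "\<dots> \<le> (3 * (\<bar>v\<bar> + \<bar>y\<bar>)) * 8" using n2 i3 cp by (intro mult_mono) auto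
  finally show "\<bar>(v * c\<^sup>2 + 2 * sn * (v * sn - y)) / c^3\<bar> \<le> 24 * (1 + \<bar>v\<bar> + \<bar>y\<bar>)" by simp
  have "v = c * ((v - y * sn) / c) + y * sn" using cp by (simp add: field_simps)
  then have "\<bar>v\<bar> \<le> \<bar>c * ((v - y * sn) / c)\<bar> + \<bar>y * sn\<bar>" by (metis abs_triangle_ineq)
  also have "\<bar>c * ((v - y * sn) / c)\<bar> \<le> \<bar>(v - y * sn) / c\<bar>"
  proof -
    have "\<bar>c * ((v - y * sn) / c)\<bar> = c * \<bar>(v - y * sn) / c\<bar>" using cp by (simp add: abs_mult)
    also have "\<dots> \<le> 1 * \<bar>(v - y * sn) / c\<bar>" using c by (intro mult_right_mono) auto
    finally show ?thesis by simp
  qed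
  also have "\<bar>y * sn\<bar> \<le> \<bar>y\<bar>" using s(2) by (simp add: abs_mult mult_left_le)
  finally show "\<bar>v\<bar> \<le> \<bar>(v - y * sn) / c\<bar> + \<bar>y\<bar>" by simp
qed

definition psi :: "nat \<Rightarrow> (real \<Rightarrow> real) \<Rightarrow> real \<Rightarrow> real \<Rightarrow> real \<Rightarrow> real" where
  "psi m h \<theta> v y = h ((v - y * sin \<theta>) / cos \<theta>) / cos \<theta> ^ m - h v"

lemma rapid_sum3:
  assumes "rapid a" "rapid b" "rapid c"
  shows "\<exists>C. \<forall>x. (1 + \<bar>x\<bar>)^k * (\<bar>a x\<bar> + \<bar>b x\<bar> + \<bar>c x\<bar>) \<le> C"
proof -
  obtain Ca Cb Cc where "\<And>x. (1 + \<bar>x\<bar>)^k * \<bar>a x\<bar> \<le> Ca" "\<And>x. (1 + \<bar>x\<bar>)^k * \<bar>b x\<bar> \<le> Cb"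
    "\<And>x. (1 + \<bar>x\<bar>)^k * \<bar>c x\<bar> \<le> Cc" using rapid_bound assms by metis
  then show ?thesis by (intro exI[of _ "Ca + Cb + Cc"]) (auto simp: distrib_left intro: add_mono)
qed

lemma psi_est:
  assumes h: "schwartz h"
  shows "\<exists>D. \<forall>\<theta> v y. \<bar>\<theta>\<bar> \<le> pi/4 \<longrightarrow>
     \<bar>v\<bar>^k * \<bar>psi m h \<theta> v y + \<theta> * y * deriv h v\<bar> \<le> D * \<theta>\<^sup>2 * (1 + \<bar>y\<bar>)^(k+2)"
proof -
  define h1 where "h1 = deriv h"
  define h2 where "h2 = deriv h1"
  have dh: "\<And>x. DERIV h x :> h1 x" using schwartz_DERIV[OF h] by (simp add: h1_def)
  have dh1: "\<And>x. DERIV h1 x :> h2 x"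
    using schwartz_DERIV[OF schwartz_deriv[OF h]] by (simp add: h1_def h2_def)
  have r0: "rapid h" using schwartz_rapid[OF h, of 0] by simp
  have r1: "rapid h1" using schwartz_rapid[OF h, of 1] by (simp add: h1_def)
  have r2: "rapid h2" using schwartz_rapid[OF h, of 2] by (simp add: h1_def h2_def numeral_2_eq_2)
  obtain CH where CH: "\<And>x. (1 + \<bar>x\<bar>)^(k+2) * (\<bar>h x\<bar> + \<bar>h1 x\<bar> + \<bar>h2 x\<bar>) \<le> CH"
    using rapid_sum3[OF r0 r1 r2] by blast
  define M where "M = (2::real)^m * (real m + 1) * (real m + 2)"
  have M0: "0 \<le> M" by (simp add: M_def)
  show ?thesis
  proof (intro exI[of _ "24 * M * 2^(k+2) * CH"] allI impI)
    fix \<theta> v y :: real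
    assume th: "\<bar>\<theta>\<bar> \<le> pi/4"
    define S0 where "S0 = (\<lambda>t::real. 1 / cos t ^ m)"
    define S1 where "S1 = (\<lambda>t::real. real m * sin t / cos t ^ (m+1))"
    define S2 where "S2 = (\<lambda>t::real. real m * ((cos t)\<^sup>2 + (real m + 1) * (sin t)\<^sup>2) / cos t ^ (m+2))"
    define A0 where "A0 = (\<lambda>t::real. (v - y * sin t) / cos t)"
    define A1 where "A1 = (\<lambda>t::real. (v * sin t - y) / (cos t)\<^sup>2)"
    define A2 where "A2 = (\<lambda>t::real. (v * (cos t)\<^sup>2 + 2 * sin t * (v * sin t - y)) / cos t ^ 3)"
    have cne: "cos t \<noteq> 0" if "\<bar>t\<bar> \<le> pi/4" for t using trig_bounds(1)[OF that] by auto
    obtain t where t: "\<bar>t\<bar> \<le> pi/4" and eq: "S0 \<theta> * h (A0 \<theta>) = S0 0 * h (A0 0)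
     + \<theta> * (S1 0 * h (A0 0) + S0 0 * h1 (A0 0) * A1 0)
     + \<theta>\<^sup>2 / 2 * (S2 t * h (A0 t) + 2 * S1 t * h1 (A0 t) * A1 t
          + S0 t * h2 (A0 t) * (A1 t)\<^sup>2 + S0 t * h1 (A0 t) * A2 t)"
      using taylor2[of S0 S1 S2 A0 A1 A2 h h1 h2 \<theta>, OF _ _ _ _ dh dh1 th]
      unfolding S0_def S1_def S2_def A0_def A1_def A2_def
      using dS0[OF cne] dS1[OF cne] dA0[OF cne] dA1[OF cne] by blast
    define P where "P = S2 t * h (A0 t) + 2 * S1 t * h1 (A0 t) * A1 t
          + S0 t * h2 (A0 t) * (A1 t)\<^sup>2 + S0 t * h1 (A0 t) * A2 t"
    have pe: "psi m h \<theta> v y + \<theta> * y * deriv h v = \<theta>\<^sup>2 / 2 * P"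
      using eq unfolding P_def psi_def h1_def[symmetric]
      by (simp add: S0_def S1_def A0_def A1_def algebra_simps)
    note tb = trig_bounds[OF t]
    define R where "R = 1 + \<bar>v\<bar> + \<bar>y\<bar>"
    have R1: "1 \<le> R" by (simp add: R_def)
    have Pb: "\<bar>P\<bar> \<le> 48 * M * R\<^sup>2 * (\<bar>h (A0 t)\<bar> + \<bar>h1 (A0 t)\<bar> + \<bar>h2 (A0 t)\<bar>)"
      unfolding P_def
    proof (rule p2_bound[OF _ _ _ _ _ R1])
      show "\<bar>S0 t\<bar> \<le> M" "\<bar>S1 t\<bar> \<le> M" "\<bar>S2 t\<bar> \<le> M"
        using S_bounds[OF tb(1,2,3), of m] unfolding S0_def S1_def S2_def M_def by auto
      show "\<bar>A1 t\<bar> \<le> 4 * R" "\<bar>A2 t\<bar> \<le> 24 * R"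
        using A_bounds[OF tb, of v y] unfolding A1_def A2_def R_def by auto
    qed
    have vb: "\<bar>v\<bar> \<le> \<bar>A0 t\<bar> + \<bar>y\<bar>" using A_bounds(3)[OF tb, of v y] by (simp add: A0_def)
    have W: "\<bar>v\<bar>^k * R\<^sup>2 \<le> 2^(k+2) * ((1 + \<bar>A0 t\<bar>)^(k+2) * (1 + \<bar>y\<bar>)^(k+2))"
      using weight_bound[OF vb, of k] by (simp add: R_def)
    have H0: "0 \<le> \<bar>h (A0 t)\<bar> + \<bar>h1 (A0 t)\<bar> + \<bar>h2 (A0 t)\<bar>" by simp
    have "\<bar>v\<bar>^k * \<bar>P\<bar> \<le> \<bar>v\<bar>^k * (48 * M * R\<^sup>2 * (\<bar>h (A0 t)\<bar> + \<bar>h1 (A0 t)\<bar> + \<bar>h2 (A0 t)\<bar>))"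
      by (rule mult_left_mono[OF Pb]) simp
    also have "\<dots> = 48 * M * (\<bar>v\<bar>^k * R\<^sup>2) * (\<bar>h (A0 t)\<bar> + \<bar>h1 (A0 t)\<bar> + \<bar>h2 (A0 t)\<bar>)"
      by (simp add: algebra_simps)
    also have "\<dots> \<le> 48 * M * (2^(k+2) * ((1 + \<bar>A0 t\<bar>)^(k+2) * (1 + \<bar>y\<bar>)^(k+2))) * (\<bar>h (A0 t)\<bar> + \<bar>h1 (A0 t)\<bar> + \<bar>h2 (A0 t)\<bar>)"
      using W M0 H0 by (intro mult_right_mono mult_left_mono) auto
    also have "\<dots> = 48 * M * 2^(k+2) * (1 + \<bar>y\<bar>)^(k+2) * ((1 + \<bar>A0 t\<bar>)^(k+2) * (\<bar>h (A0 t)\<bar> + \<bar>h1 (A0 t)\<bar> + \<bar>h2 (A0 t)\<bar>))"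
      by (simp add: algebra_simps)
    also have "\<dots> \<le> 48 * M * 2^(k+2) * (1 + \<bar>y\<bar>)^(k+2) * CH"
      using CH[of "A0 t"] M0 by (intro mult_left_mono) auto
    finally have VP: "\<bar>v\<bar>^k * \<bar>P\<bar> \<le> 48 * M * 2^(k+2) * (1 + \<bar>y\<bar>)^(k+2) * CH" .
    have "\<bar>v\<bar>^k * \<bar>psi m h \<theta> v y + \<theta> * y * deriv h v\<bar> = \<theta>\<^sup>2 / 2 * (\<bar>v\<bar>^k * \<bar>P\<bar>)"
      unfolding pe by (simp add: abs_mult)
    also have "\<dots> \<le> \<theta>\<^sup>2 / 2 * (48 * M * 2^(k+2) * (1 + \<bar>y\<bar>)^(k+2) * CH)"
      by (rule mult_left_mono[OF VP]) simp
    also have "\<dots> = 24 * M * 2^(k+2) * CH * \<theta>\<^sup>2 * (1 + \<bar>y\<bar>)^(k+2)"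
      by (simp add: algebra_simps)
    finally show "\<bar>v\<bar>^k * \<bar>psi m h \<theta> v y + \<theta> * y * deriv h v\<bar> \<le> 24 * M * 2^(k+2) * CH * \<theta>\<^sup>2 * (1 + \<bar>y\<bar>)^(k+2)" .
  qed
qed

locale kac =
  fixes s :: real and \<beta> G :: "real \<Rightarrow> real"
  assumes s1: "s < 1" and cs: "cross_section s \<beta>"
    and Gc: "continuous_on UNIV G" and Gr: "rapid G" and Ge: "\<And>y. G (-y) = G y"
begin

definition Phi :: "nat \<Rightarrow> (real \<Rightarrow> real) \<Rightarrow> real \<Rightarrow> real \<Rightarrow> real" where
  "Phi m h \<theta> v = (\<integral>y. G y * psi m h \<theta> v y \<partial>lborel)"

definition T :: "nat \<Rightarrow> (real \<Rightarrow> real) \<Rightarrow> real \<Rightarrow> real" where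
  "T m h v = (LINT \<theta>:angle_dom|lebesgue. \<beta> \<theta> * Phi m h \<theta> v)"

lemma G_weight_int: "integrable lborel (\<lambda>y. \<bar>G y\<bar> * (1 + \<bar>y\<bar>)^k)"
proof -
  obtain C where C: "\<And>x. (1 + \<bar>x\<bar>)^(k+2) * \<bar>G x\<bar> \<le> C" using rapid_bound[OF Gr] by blast
  show ?thesis
  proof (rule integrable_decay)
    show "continuous_on UNIV (\<lambda>y. \<bar>G y\<bar> * (1 + \<bar>y\<bar>)^k)"
      using Gc by (intro continuous_intros) auto
    show "(1 + \<bar>y\<bar>)\<^sup>2 * \<bar>\<bar>G y\<bar> * (1 + \<bar>y\<bar>)^k\<bar> \<le> C" for y
    proof -
      have "(1 + \<bar>y\<bar>)\<^sup>2 * \<bar>\<bar>G y\<bar> * (1 + \<bar>y\<bar>)^k\<bar> = (1 + \<bar>y\<bar>)^(k+2) * \<bar>G y\<bar>"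
      proof -
        have gen: "\<And>a b::real. b^2 * (a * b^k) = b^(k+2) * a" by (simp add: power_add mult_ac power2_eq_square)
        have "\<bar>\<bar>G y\<bar> * (1 + \<bar>y\<bar>)^k\<bar> = \<bar>G y\<bar> * (1 + \<bar>y\<bar>)^k" by simp
        then show ?thesis by (simp only: gen)
      qed
      then show ?thesis using C[of y] by (simp only:)
    qed
  qed
qed

lemma G_lin_int: "integrable lborel (\<lambda>y. G y * y)"
proof (rule Bochner_Integration.integrable_bound[OF G_weight_int[of 1]])
  have "continuous_on UNIV (\<lambda>y. G y * y)" using Gc by (intro continuous_intros) auto
  then show "(\<lambda>y. G y * y) \<in> borel_measurable lborel" by (simp add: borel_measurable_continuous_onI)
  show "AE x in lborel. norm (G x * x) \<le> norm (\<bar>G x\<bar> * (1 + \<bar>x\<bar>)^1)"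
    by (intro AE_I2) (simp add: abs_mult mult_left_mono)
qed

lemma G_lin_zero: "(\<integral>y. G y * y \<partial>lborel) = 0"
proof -
  have "(\<integral>y. G y * y \<partial>lborel) = \<bar>-1\<bar> *\<^sub>R (\<integral>x. G (0 + -1 * x) * (0 + -1 * x) \<partial>lborel)"
    by (rule lborel_integral_real_affine) simp
  also have "\<dots> = - (\<integral>y. G y * y \<partial>lborel)" by (simp add: Ge)
  finally show ?thesis by simp
qed

lemma psi_bounded:
  assumes "\<And>x. \<bar>h x\<bar> \<le> B"
  shows "\<bar>psi m h \<theta> v y\<bar> \<le> B / \<bar>cos \<theta>\<bar>^m + B"
proof -
  have "\<bar>h ((v - y * sin \<theta>) / cos \<theta>) / cos \<theta> ^ m\<bar> \<le> B / \<bar>cos \<theta>\<bar>^m"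
    using assms by (simp add: abs_divide power_abs divide_right_mono)
  then show ?thesis unfolding psi_def using assms[of v] by linarith
qed

lemma psi_cont_y:
  assumes "continuous_on UNIV h"
  shows "continuous_on UNIV (\<lambda>y. G y * psi m h \<theta> v y)"
  unfolding psi_def divide_inverse using Gc
  by (intro continuous_intros continuous_on_compose2[OF assms]) auto

lemma Gpsi_int:
  assumes "continuous_on UNIV h" "\<And>x. \<bar>h x\<bar> \<le> B"
  shows "integrable lborel (\<lambda>y. G y * psi m h \<theta> v y)"
proof -
  obtain C where C: "\<And>x. (1 + \<bar>x\<bar>)^2 * \<bar>G x\<bar> \<le> C" using rapid_bound[OF Gr] by blast
  have "0 \<le> (1 + \<bar>0::real\<bar>)^2 * \<bar>G 0\<bar>" by simp
  then have C0: "0 \<le> C" using C[of 0] by linarith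
  show ?thesis
  proof (rule integrable_decay[OF psi_cont_y[OF assms(1)]])
    fix y
    have "(1 + \<bar>y\<bar>)\<^sup>2 * \<bar>G y * psi m h \<theta> v y\<bar> = ((1 + \<bar>y\<bar>)\<^sup>2 * \<bar>G y\<bar>) * \<bar>psi m h \<theta> v y\<bar>"
      by (simp add: abs_mult)
    also have "\<dots> \<le> C * (B / \<bar>cos \<theta>\<bar>^m + B)"
      using C[of y] psi_bounded[OF assms(2)] C0 by (intro mult_mono) auto
    finally show "(1 + \<bar>y\<bar>)\<^sup>2 * \<bar>G y * psi m h \<theta> v y\<bar> \<le> C * (B / \<bar>cos \<theta>\<bar>^m + B)" .
  qed
qed

lemma Phi_est:
  assumes h: "schwartz h"
  shows "\<exists>D. \<forall>\<theta> v. \<bar>\<theta>\<bar> \<le> pi/4 \<longrightarrow> \<bar>v\<bar>^k * \<bar>Phi m h \<theta> v\<bar> \<le> D * \<theta>\<^sup>2"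
proof -
  obtain D where D: "\<And>\<theta> v y. \<bar>\<theta>\<bar> \<le> pi/4 \<Longrightarrow>
     \<bar>v\<bar>^k * \<bar>psi m h \<theta> v y + \<theta> * y * deriv h v\<bar> \<le> D * \<theta>\<^sup>2 * (1 + \<bar>y\<bar>)^(k+2)"
    using psi_est[OF h, of k m] by blast
  obtain B where B: "\<And>x. \<bar>h x\<bar> \<le> B" using rapid_bounded[OF schwartz_rapid[OF h, of 0]] by auto
  have hc: "continuous_on UNIV h" by (rule schwartz_cont[OF h])
  define I where "I = (\<integral>y. \<bar>G y\<bar> * (1 + \<bar>y\<bar>)^(k+2) \<partial>lborel)"
  show ?thesis
  proof (intro exI[of _ "D * I"] allI impI)
    fix \<theta> v :: real assume th: "\<bar>\<theta>\<bar> \<le> pi/4"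
    have i1: "integrable lborel (\<lambda>y. G y * psi m h \<theta> v y)" by (rule Gpsi_int[OF hc B])
    have i2: "integrable lborel (\<lambda>y. (\<theta> * deriv h v) * (G y * y))" using G_lin_int by simp
    have "Phi m h \<theta> v = (\<integral>y. G y * psi m h \<theta> v y + (\<theta> * deriv h v) * (G y * y) \<partial>lborel)"
      unfolding Phi_def using i1 i2 G_lin_zero by (simp add: integral_add)
    also have "\<dots> = (\<integral>y. G y * (psi m h \<theta> v y + \<theta> * y * deriv h v) \<partial>lborel)"
      by (simp add: algebra_simps)
    finally have pe: "Phi m h \<theta> v = (\<integral>y. G y * (psi m h \<theta> v y + \<theta> * y * deriv h v) \<partial>lborel)" .
    have i3: "integrable lborel (\<lambda>y. G y * (psi m h \<theta> v y + \<theta> * y * deriv h v))"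
      using Bochner_Integration.integrable_add[OF i1 i2] by (simp add: algebra_simps)
    have "\<bar>v\<bar>^k * \<bar>Phi m h \<theta> v\<bar> = \<bar>(\<integral>y. \<bar>v\<bar>^k * (G y * (psi m h \<theta> v y + \<theta> * y * deriv h v)) \<partial>lborel)\<bar>"
      unfolding pe by (simp add: abs_mult)
    also have "\<dots> \<le> (\<integral>y. \<bar>\<bar>v\<bar>^k * (G y * (psi m h \<theta> v y + \<theta> * y * deriv h v))\<bar> \<partial>lborel)"
      by (rule integral_abs_bound)
    also have "\<dots> \<le> (\<integral>y. (D * \<theta>\<^sup>2) * (\<bar>G y\<bar> * (1 + \<bar>y\<bar>)^(k+2)) \<partial>lborel)"
    proof (rule integral_mono)
      show "integrable lborel (\<lambda>y. \<bar>\<bar>v\<bar>^k * (G y * (psi m h \<theta> v y + \<theta> * y * deriv h v))\<bar>)"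
        using i3 by (intro integrable_abs integrable_mult_right)
      show "integrable lborel (\<lambda>y. (D * \<theta>\<^sup>2) * (\<bar>G y\<bar> * (1 + \<bar>y\<bar>)^(k+2)))"
        using G_weight_int by (intro integrable_mult_right)
      fix y
      have "\<bar>\<bar>v\<bar>^k * (G y * (psi m h \<theta> v y + \<theta> * y * deriv h v))\<bar>
          = \<bar>G y\<bar> * (\<bar>v\<bar>^k * \<bar>psi m h \<theta> v y + \<theta> * y * deriv h v\<bar>)"
        by (simp only: abs_mult power_abs abs_abs mult_ac)
      also have "\<dots> \<le> \<bar>G y\<bar> * (D * \<theta>\<^sup>2 * (1 + \<bar>y\<bar>)^(k+2))"
        by (rule mult_left_mono[OF D[OF th]]) simp
      finally show "\<bar>\<bar>v\<bar>^k * (G y * (psi m h \<theta> v y + \<theta> * y * deriv h v))\<bar>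
          \<le> (D * \<theta>\<^sup>2) * (\<bar>G y\<bar> * (1 + \<bar>y\<bar>)^(k+2))" by (simp add: algebra_simps)
    qed
    also have "\<dots> = D * I * \<theta>\<^sup>2" unfolding I_def integral_mult_right_zero by (simp only: mult_ac)
    finally show "\<bar>v\<bar>^k * \<bar>Phi m h \<theta> v\<bar> \<le> D * I * \<theta>\<^sup>2" .
  qed
qed

end

lemma borel_leb: "f \<in> borel_measurable borel \<Longrightarrow> f \<in> borel_measurable lebesgue"
  by (rule measurable_completion) simp

lemma cont_leb: "continuous_on UNIV f \<Longrightarrow> f \<in> borel_measurable lebesgue"
  by (rule borel_leb) (rule borel_measurable_continuous_onI)

lemma inv_cos_pow: "\<bar>t\<bar> \<le> pi/4 \<Longrightarrow> 1 / \<bar>cos t\<bar>^n \<le> 2^n"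
  using inv_pow_le(1)[OF trig_bounds(1)] trig_bounds(1)[of t] by simp

lemma powr_int: assumes "a > (-1::real)"
  shows "integrable lebesgue (\<lambda>x. indicator {-1..1} x * \<bar>x\<bar> powr a)"
proof -
  have "(\<lambda>x. x powr a) integrable_on {0..1}"
    by (rule integrable_on_powr_from_0) (use assms in auto)
  then have "(\<lambda>x. x powr a) absolutely_integrable_on {0..1}"
    by (intro nonnegative_absolutely_integrable_1) auto
  then have i0: "integrable lebesgue (\<lambda>x. indicator {0..1} x * x powr a)"
    by (simp add: set_integrable_def)
  have m0: "(\<lambda>x. indicator {0..1} x * x powr a) \<in> borel_measurable lborel" by measurable
  have i1: "integrable lborel (\<lambda>x. indicator {0..1} x * x powr a)"
    using i0 integrable_completion[OF m0] by simp
  have i2: "integrable lborel (\<lambda>x. indicator {0..1} (0 + -1 * x) * (0 + -1 * x) powr a)"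
    by (rule lborel_integrable_real_affine[OF i1]) simp
  have i3: "integrable lborel (\<lambda>x. indicator {0..1} x * x powr a + indicator {0..1} (-x) * (-x) powr a)"
    using Bochner_Integration.integrable_add[OF i1 i2] by simp
  have i4: "integrable lborel (\<lambda>x. indicator {-1..1} x * \<bar>x\<bar> powr a)"
  proof (rule Bochner_Integration.integrable_bound[OF i3])
    show "(\<lambda>x. indicator {-1..1} x * \<bar>x\<bar> powr a) \<in> borel_measurable lborel" by measurable
    show "AE x in lborel. norm (indicator {-1..1} x * \<bar>x\<bar> powr a :: real)
        \<le> norm (indicator {0..1} x * x powr a + indicator {0..1} (-x) * (-x) powr a :: real)"
      by (intro AE_I2) (auto simp: indicator_def)
  qed
  have m4: "(\<lambda>x. indicator {-1..1} x * \<bar>x\<bar> powr a) \<in> borel_measurable lborel" by measurable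
  show ?thesis using i4 integrable_completion[OF m4] by simp
qed

context kac
begin

lemma beta_facts:
  shows "(\<lambda>\<theta>. indicator angle_dom \<theta> * \<beta> \<theta>) \<in> borel_measurable lebesgue"
    "\<And>\<theta>. \<theta> \<in> angle_dom \<Longrightarrow> 0 \<le> \<beta> \<theta>"
  using cs unfolding cross_section_def by auto

lemma beta_sq_int: "integrable lebesgue (\<lambda>\<theta>. indicator angle_dom \<theta> * (\<beta> \<theta> * \<theta>\<^sup>2))"
proof -
  obtain c C \<delta>0 where cC: "0 < c" "0 < C" "0 < \<delta>0"
    and bnd0: "\<forall>\<theta>\<in>angle_dom. \<bar>\<theta>\<bar> < \<delta>0 \<longrightarrow>
            c * \<bar>\<theta>\<bar> powr (- 1 - 2 * s) \<le> \<beta> \<theta> \<and> \<beta> \<theta> \<le> C * \<bar>\<theta>\<bar> powr (- 1 - 2 * s)"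
    using cs unfolding cross_section_def by blast
  have bnd: "\<And>\<theta>. \<theta> \<in> angle_dom \<Longrightarrow> \<bar>\<theta>\<bar> < \<delta>0 \<Longrightarrow> \<beta> \<theta> \<le> C * \<bar>\<theta>\<bar> powr (- 1 - 2 * s)"
    using bnd0 by blast
  have away: "set_integrable lebesgue {\<theta>. \<delta>0 \<le> \<bar>\<theta>\<bar> \<and> \<bar>\<theta>\<bar> \<le> pi/4} \<beta>"
    using cs cC(3) unfolding cross_section_def by blast
  then have i1: "integrable lebesgue (\<lambda>\<theta>. indicator {\<theta>. \<delta>0 \<le> \<bar>\<theta>\<bar> \<and> \<bar>\<theta>\<bar> \<le> pi/4} \<theta> * \<beta> \<theta>)"
    by (simp add: set_integrable_def)
  have i2: "integrable lebesgue (\<lambda>\<theta>. C * (indicator {-1..1} \<theta> * \<bar>\<theta>\<bar> powr (1 - 2 * s)))"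
    using powr_int[of "1 - 2 * s"] s1 by simp
  show ?thesis
  proof (rule Bochner_Integration.integrable_bound[OF Bochner_Integration.integrable_add[OF i1 i2]])
    have "(\<lambda>\<theta>. (indicator angle_dom \<theta> * \<beta> \<theta>) * \<theta>\<^sup>2) \<in> borel_measurable lebesgue"
      by (rule borel_measurable_times[OF beta_facts(1) cont_leb]) (intro continuous_intros)
    then show "(\<lambda>\<theta>. indicator angle_dom \<theta> * (\<beta> \<theta> * \<theta>\<^sup>2)) \<in> borel_measurable lebesgue"
      by (simp add: mult_ac)
    show "AE \<theta> in lebesgue. norm (indicator angle_dom \<theta> * (\<beta> \<theta> * \<theta>\<^sup>2))
      \<le> norm (indicator {\<theta>. \<delta>0 \<le> \<bar>\<theta>\<bar> \<and> \<bar>\<theta>\<bar> \<le> pi/4} \<theta> * \<beta> \<theta> + C * (indicator {-1..1} \<theta> * \<bar>\<theta>\<bar> powr (1 - 2 * s)))"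
    proof (rule AE_I2)
      fix \<theta> :: real
      show "norm (indicator angle_dom \<theta> * (\<beta> \<theta> * \<theta>\<^sup>2))
        \<le> norm (indicator {\<theta>. \<delta>0 \<le> \<bar>\<theta>\<bar> \<and> \<bar>\<theta>\<bar> \<le> pi/4} \<theta> * \<beta> \<theta> + C * (indicator {-1..1} \<theta> * \<bar>\<theta>\<bar> powr (1 - 2 * s)))"
      proof (cases "\<theta> \<in> angle_dom")
        case False then show ?thesis by simp
      next
        case True
        have b0: "0 \<le> \<beta> \<theta>" by (rule beta_facts(2)[OF True])
        have th: "\<bar>\<theta>\<bar> \<le> pi/4" "\<theta> \<noteq> 0" using True by (auto simp: angle_dom_def)
        have pi1: "pi/4 < 1" using pi_less_4 by simp
        have p0: "0 \<le> C * (indicator {-1..1} \<theta> * \<bar>\<theta>\<bar> powr (1 - 2 * s))"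
          using cC by (simp add: indicator_def)
        have sq1: "\<theta>\<^sup>2 \<le> 1"
          using th pi1 by (simp add: abs_square_le_1)
        show ?thesis
        proof (cases "\<delta>0 \<le> \<bar>\<theta>\<bar>")
          case True
          have "\<beta> \<theta> * \<theta>\<^sup>2 \<le> \<beta> \<theta>" using b0 sq1 by (simp add: mult_left_le)
          then show ?thesis using True th b0 p0 \<open>\<theta> \<in> angle_dom\<close> by (simp add: abs_mult)
        next
          case False
          have bb: "\<beta> \<theta> \<le> C * \<bar>\<theta>\<bar> powr (- 1 - 2 * s)" using bnd[OF \<open>\<theta> \<in> angle_dom\<close>] False by simp
          have "\<beta> \<theta> * \<theta>\<^sup>2 \<le> C * \<bar>\<theta>\<bar> powr (- 1 - 2 * s) * \<theta>\<^sup>2"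
            by (rule mult_right_mono[OF bb]) simp
          also have "\<dots> = C * \<bar>\<theta>\<bar> powr (1 - 2 * s)"
          proof -
            have e: "\<bar>\<theta>\<bar> powr 2 = \<theta>\<^sup>2" using th by (simp add: powr_numeral)
            have "\<bar>\<theta>\<bar> powr (- 1 - 2 * s) * \<theta>\<^sup>2 = \<bar>\<theta>\<bar> powr (- 1 - 2 * s) * \<bar>\<theta>\<bar> powr 2"
              by (simp only: e)
            also have "\<dots> = \<bar>\<theta>\<bar> powr (- 1 - 2 * s + 2)" by (rule powr_add[symmetric])
            also have "- 1 - 2 * s + 2 = 1 - 2 * s" by simp
            finally show ?thesis by simp
          qed
          finally have "\<beta> \<theta> * \<theta>\<^sup>2 \<le> C * \<bar>\<theta>\<bar> powr (1 - 2 * s)" .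
          moreover have "\<theta> \<in> {-1..1}" using th pi1 by auto
          ultimately show ?thesis using False b0 \<open>\<theta> \<in> angle_dom\<close> cC
            by (simp add: abs_mult)
        qed
      qed
    qed
  qed
qed

end

context kac
begin

lemma psi_DERIV_v:
  assumes dh: "\<And>x. DERIV h x :> h' x" and c: "cos \<theta> \<noteq> 0"
  shows "DERIV (\<lambda>v. G y * psi m h \<theta> v y) v :> G y * psi (Suc m) h' \<theta> v y"
proof -
  have a: "DERIV (\<lambda>v. (v - y * sin \<theta>) / cos \<theta>) v :> 1 / cos \<theta>"
    using c by (auto intro!: derivative_eq_intros)
  have b: "DERIV (\<lambda>v. h ((v - y * sin \<theta>) / cos \<theta>)) v :> h' ((v - y * sin \<theta>) / cos \<theta>) * (1 / cos \<theta>)"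
    by (rule DERIV_chain2[OF dh a])
  have "DERIV (\<lambda>v. G y * (h ((v - y * sin \<theta>) / cos \<theta>) / cos \<theta> ^ m - h v)) v :>
      G y * (h' ((v - y * sin \<theta>) / cos \<theta>) * (1 / cos \<theta>) / cos \<theta> ^ m - h' v)"
    by (intro DERIV_cmult DERIV_diff DERIV_cdivide b dh)
  then show ?thesis unfolding psi_def by (rule DERIV_cong) (simp add: field_simps)
qed

lemma Phi_DERIV:
  assumes h: "schwartz h" and th: "\<bar>\<theta>\<bar> \<le> pi/4"
  shows "DERIV (\<lambda>v. Phi m h \<theta> v) v0 :> Phi (Suc m) (deriv h) \<theta> v0"
proof -
  obtain B where B: "\<And>x. \<bar>h x\<bar> \<le> B" using rapid_bounded[OF schwartz_rapid[OF h, of 0]] by auto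
  obtain B1 where B1: "\<And>x. \<bar>deriv h x\<bar> \<le> B1" using rapid_bounded[OF schwartz_rapid[OF h, of 1]] by auto
  have hc: "continuous_on UNIV h" by (rule schwartz_cont[OF h])
  have h1c: "continuous_on UNIV (deriv h)" by (rule schwartz_cont[OF schwartz_deriv[OF h]])
  have c: "cos \<theta> \<noteq> 0" using trig_bounds(1)[OF th] by auto
  have ic: "1 / \<bar>cos \<theta>\<bar>^Suc m \<le> 2^Suc m" by (rule inv_cos_pow[OF th])
  show ?thesis unfolding Phi_def
  proof (rule DERIV_integral[where w="\<lambda>y. (2^Suc m * B1 + B1) * (\<bar>G y\<bar> * (1 + \<bar>y\<bar>)^0)"])
    show "integrable lborel (\<lambda>y. G y * psi m h \<theta> v y)" for v by (rule Gpsi_int[OF hc B])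
    show "(\<lambda>y. G y * psi (Suc m) (deriv h) \<theta> v y) \<in> borel_measurable lborel" for v
      using psi_cont_y[OF h1c] by (simp add: borel_measurable_continuous_onI)
    show "integrable lborel (\<lambda>y. (2^Suc m * B1 + B1) * (\<bar>G y\<bar> * (1 + \<bar>y\<bar>)^0))"
      using G_weight_int[of 0] by (intro integrable_mult_right)
    show "((\<lambda>v. G y * psi m h \<theta> v y) has_real_derivative G y * psi (Suc m) (deriv h) \<theta> v y) (at v)" for y v
      by (rule psi_DERIV_v[OF schwartz_DERIV[OF h] c])
    show "\<bar>G y * psi (Suc m) (deriv h) \<theta> v y\<bar> \<le> (2^Suc m * B1 + B1) * (\<bar>G y\<bar> * (1 + \<bar>y\<bar>)^0)" for y v
    proof -
      have B10: "0 \<le> B1" using B1[of 0] by linarith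
      have "B1 / \<bar>cos \<theta>\<bar>^Suc m = B1 * (1 / \<bar>cos \<theta>\<bar>^Suc m)" by simp
      also have "\<dots> \<le> B1 * 2^Suc m" using ic B10 by (intro mult_left_mono) auto
      finally have q: "B1 / \<bar>cos \<theta>\<bar>^Suc m \<le> B1 * 2^Suc m" .
      have p: "\<bar>psi (Suc m) (deriv h) \<theta> v y\<bar> \<le> B1 / \<bar>cos \<theta>\<bar>^Suc m + B1"
        by (rule psi_bounded[where h="deriv h" and B=B1, OF B1])
      have "\<bar>psi (Suc m) (deriv h) \<theta> v y\<bar> \<le> 2^Suc m * B1 + B1"
        using p q by (simp only: mult.commute[of B1]; linarith)
      then show ?thesis by (simp add: abs_mult mult_left_mono mult_ac)
    qed
  qed
qed

lemma Phi_cont: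
  assumes h: "schwartz h"
  shows "continuous_on {-pi/4..pi/4} (\<lambda>\<theta>. Phi m h \<theta> v)"
  unfolding continuous_on_def
proof
  fix \<theta>0 assume t0: "\<theta>0 \<in> {-pi/4..pi/4}"
  obtain B where B: "\<And>x. \<bar>h x\<bar> \<le> B" using rapid_bounded[OF schwartz_rapid[OF h, of 0]] by auto
  have B0: "0 \<le> B" using B[of 0] by linarith
  have hc: "continuous_on UNIV h" by (rule schwartz_cont[OF h])
  have hC: "isCont h x" for x using hc by (simp add: continuous_on_eq_continuous_at)
  show "((\<lambda>\<theta>. Phi m h \<theta> v) \<longlongrightarrow> Phi m h \<theta>0 v) (at \<theta>0 within {-pi/4..pi/4})"
    unfolding Phi_def
  proof (rule dct_at[where w="\<lambda>y. (2^m * B + B) * (\<bar>G y\<bar> * (1 + \<bar>y\<bar>)^0)"])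
    show "(\<lambda>y. G y * psi m h t v y) \<in> borel_measurable lborel" for t
      using psi_cont_y[OF hc] by (simp add: borel_measurable_continuous_onI)
    show "(\<lambda>y. G y * psi m h \<theta>0 v y) \<in> borel_measurable lborel"
      using psi_cont_y[OF hc] by (simp add: borel_measurable_continuous_onI)
    show "integrable lborel (\<lambda>y. (2^m * B + B) * (\<bar>G y\<bar> * (1 + \<bar>y\<bar>)^0))"
      using G_weight_int[of 0] by (intro integrable_mult_right)
    show "((\<lambda>t. G y * psi m h t v y) \<longlongrightarrow> G y * psi m h \<theta>0 v y) (at \<theta>0 within {-pi/4..pi/4})" for y
    proof -
      have tt: "\<bar>\<theta>0\<bar> \<le> pi/4" using t0 by (auto simp: abs_if)
      have c: "cos \<theta>0 \<noteq> 0" using trig_bounds(1)[OF tt] by auto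
      have "isCont (\<lambda>t. G y * psi m h t v y) \<theta>0"
        unfolding psi_def using c
        by (intro continuous_intros isCont_o2[OF _ hC]) auto
      then show ?thesis unfolding isCont_def by (rule tendsto_within_subset) simp
    qed
    show "\<bar>G y * psi m h t v y\<bar> \<le> (2^m * B + B) * (\<bar>G y\<bar> * (1 + \<bar>y\<bar>)^0)"
      if "t \<in> {-pi/4..pi/4}" for t y
    proof -
      have tt: "\<bar>t\<bar> \<le> pi/4" using that by auto
      have "B / \<bar>cos t\<bar>^m = B * (1 / \<bar>cos t\<bar>^m)" by simp
      also have "\<dots> \<le> B * 2^m" using inv_cos_pow[OF tt] B0 by (intro mult_left_mono) auto
      finally have q: "B / \<bar>cos t\<bar>^m \<le> B * 2^m" .
      have p: "\<bar>psi m h t v y\<bar> \<le> B / \<bar>cos t\<bar>^m + B"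
        by (rule psi_bounded[where h=h and B=B, OF B])
      have "\<bar>psi m h t v y\<bar> \<le> 2^m * B + B"
        using p q by (simp only: mult.commute[of B]; linarith)
      then show ?thesis by (simp add: abs_mult mult_left_mono mult_ac)
    qed
  qed
qed

end

context kac
begin

lemma T_eq: "T m h v = (\<integral>\<theta>. indicator angle_dom \<theta> * (\<beta> \<theta> * Phi m h \<theta> v) \<partial>lebesgue)"
  unfolding T_def set_lebesgue_integral_def by simp

lemma angle_dom_sub: "\<theta> \<in> angle_dom \<Longrightarrow> \<theta> \<in> {-pi/4..pi/4}"
  by (auto simp: angle_dom_def)

lemma angle_dom_abs: "\<theta> \<in> angle_dom \<Longrightarrow> \<bar>\<theta>\<bar> \<le> pi/4"
  by (auto simp: angle_dom_def)

lemma F_meas: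
  assumes h: "schwartz h"
  shows "(\<lambda>\<theta>. indicator angle_dom \<theta> * (\<beta> \<theta> * Phi m h \<theta> v)) \<in> borel_measurable lebesgue"
proof -
  have "(\<lambda>\<theta>. indicator {-pi/4..pi/4} \<theta> *\<^sub>R Phi m h \<theta> v) \<in> borel_measurable borel"
    by (rule borel_measurable_continuous_on_indicator[OF _ Phi_cont[OF h]]) simp
  then have m2: "(\<lambda>\<theta>. indicator {-pi/4..pi/4} \<theta> * Phi m h \<theta> v) \<in> borel_measurable lebesgue"
    by (intro borel_leb) simp
  have "(\<lambda>\<theta>. (indicator angle_dom \<theta> * \<beta> \<theta>) * (indicator {-pi/4..pi/4} \<theta> * Phi m h \<theta> v)) \<in> borel_measurable lebesgue"
    by (rule borel_measurable_times[OF beta_facts(1) m2])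
  moreover have "(\<lambda>\<theta>. (indicator angle_dom \<theta> * \<beta> \<theta>) * (indicator {-pi/4..pi/4} \<theta> * Phi m h \<theta> v))
      = (\<lambda>\<theta>. indicator angle_dom \<theta> * (\<beta> \<theta> * Phi m h \<theta> v))"
    by (rule ext) (use angle_dom_sub in \<open>auto simp: indicator_def\<close>)
  ultimately show ?thesis by (simp only:)
qed

lemma F_bound:
  assumes h: "schwartz h"
  obtains D where "\<And>\<theta> v. \<bar>v\<bar>^k * \<bar>indicator angle_dom \<theta> * (\<beta> \<theta> * Phi m h \<theta> v)\<bar>
      \<le> D * (indicator angle_dom \<theta> * (\<beta> \<theta> * \<theta>\<^sup>2))"
proof -
  obtain D where D: "\<And>\<theta> v. \<bar>\<theta>\<bar> \<le> pi/4 \<Longrightarrow> \<bar>v\<bar>^k * \<bar>Phi m h \<theta> v\<bar> \<le> D * \<theta>\<^sup>2"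
    using Phi_est[OF h, of k m] by blast
  have "\<bar>v\<bar>^k * \<bar>indicator angle_dom \<theta> * (\<beta> \<theta> * Phi m h \<theta> v)\<bar>
      \<le> D * (indicator angle_dom \<theta> * (\<beta> \<theta> * \<theta>\<^sup>2))" for \<theta> v
  proof (cases "\<theta> \<in> angle_dom")
    case False then show ?thesis by simp
  next
    case True
    have b0: "0 \<le> \<beta> \<theta>" by (rule beta_facts(2)[OF True])
    have "\<bar>v\<bar>^k * \<bar>indicator angle_dom \<theta> * (\<beta> \<theta> * Phi m h \<theta> v)\<bar> = \<beta> \<theta> * (\<bar>v\<bar>^k * \<bar>Phi m h \<theta> v\<bar>)"
      using True b0 by (simp add: abs_mult mult_ac)
    also have "\<dots> \<le> \<beta> \<theta> * (D * \<theta>\<^sup>2)" by (rule mult_left_mono[OF D[OF angle_dom_abs[OF True]] b0])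
    finally show ?thesis using True by (simp add: mult_ac)
  qed
  then show ?thesis by (rule that)
qed

lemma F_int:
  assumes h: "schwartz h"
  shows "integrable lebesgue (\<lambda>\<theta>. indicator angle_dom \<theta> * (\<beta> \<theta> * Phi m h \<theta> v))"
proof -
  obtain D where D: "\<And>\<theta> v. \<bar>v\<bar>^0 * \<bar>indicator angle_dom \<theta> * (\<beta> \<theta> * Phi m h \<theta> v)\<bar>
      \<le> D * (indicator angle_dom \<theta> * (\<beta> \<theta> * \<theta>\<^sup>2))"
    using F_bound[OF h, of 0 m] by blast
  show ?thesis
  proof (rule Bochner_Integration.integrable_bound[OF integrable_mult_right[OF beta_sq_int, of D] F_meas[OF h]])
    show "AE \<theta> in lebesgue. norm (indicator angle_dom \<theta> * (\<beta> \<theta> * Phi m h \<theta> v))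
        \<le> norm (D * (indicator angle_dom \<theta> * (\<beta> \<theta> * \<theta>\<^sup>2)))"
    proof (rule AE_I2)
      fix \<theta>
      have "\<bar>indicator angle_dom \<theta> * (\<beta> \<theta> * Phi m h \<theta> v)\<bar> \<le> D * (indicator angle_dom \<theta> * (\<beta> \<theta> * \<theta>\<^sup>2))"
        using D[of v \<theta>] by simp
      then show "norm (indicator angle_dom \<theta> * (\<beta> \<theta> * Phi m h \<theta> v))
        \<le> norm (D * (indicator angle_dom \<theta> * (\<beta> \<theta> * \<theta>\<^sup>2)))"
        unfolding real_norm_def by (rule order_trans[OF _ abs_ge_self])
    qed
  qed
qed

lemma T_decay:
  assumes h: "schwartz h"
  shows "\<exists>E. \<forall>v. \<bar>v\<bar>^k * \<bar>T m h v\<bar> \<le> E"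
proof -
  obtain D where D: "\<And>\<theta> v. \<bar>v\<bar>^k * \<bar>indicator angle_dom \<theta> * (\<beta> \<theta> * Phi m h \<theta> v)\<bar>
      \<le> D * (indicator angle_dom \<theta> * (\<beta> \<theta> * \<theta>\<^sup>2))"
    using F_bound[OF h, of k m] by blast
  show ?thesis
  proof (intro exI allI)
    fix v
    have "\<bar>v\<bar>^k * \<bar>T m h v\<bar> = \<bar>\<integral>\<theta>. \<bar>v\<bar>^k * (indicator angle_dom \<theta> * (\<beta> \<theta> * Phi m h \<theta> v)) \<partial>lebesgue\<bar>"
      unfolding T_eq by (simp add: abs_mult)
    also have "\<dots> \<le> (\<integral>\<theta>. \<bar>\<bar>v\<bar>^k * (indicator angle_dom \<theta> * (\<beta> \<theta> * Phi m h \<theta> v))\<bar> \<partial>lebesgue)"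
      by (rule integral_abs_bound)
    also have "\<dots> \<le> (\<integral>\<theta>. D * (indicator angle_dom \<theta> * (\<beta> \<theta> * \<theta>\<^sup>2)) \<partial>lebesgue)"
    proof (rule integral_mono)
      show "integrable lebesgue (\<lambda>\<theta>. \<bar>\<bar>v\<bar>^k * (indicator angle_dom \<theta> * (\<beta> \<theta> * Phi m h \<theta> v))\<bar>)"
        using F_int[OF h] by (intro integrable_abs integrable_mult_right)
      show "integrable lebesgue (\<lambda>\<theta>. D * (indicator angle_dom \<theta> * (\<beta> \<theta> * \<theta>\<^sup>2)))"
        using beta_sq_int by (intro integrable_mult_right)
      show "\<bar>\<bar>v\<bar>^k * (indicator angle_dom \<theta> * (\<beta> \<theta> * Phi m h \<theta> v))\<bar>
          \<le> D * (indicator angle_dom \<theta> * (\<beta> \<theta> * \<theta>\<^sup>2))" for \<theta>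
        using D[of v \<theta>] by (simp add: abs_mult)
    qed
    finally show "\<bar>v\<bar>^k * \<bar>T m h v\<bar> \<le> (\<integral>\<theta>. D * (indicator angle_dom \<theta> * (\<beta> \<theta> * \<theta>\<^sup>2)) \<partial>lebesgue)" .
  qed
qed

lemma T_DERIV:
  assumes h: "schwartz h"
  shows "DERIV (T m h) v0 :> T (Suc m) (deriv h) v0"
proof -
  have h1: "schwartz (deriv h)" by (rule schwartz_deriv[OF h])
  obtain D where D: "\<And>\<theta> v. \<bar>v\<bar>^0 * \<bar>indicator angle_dom \<theta> * (\<beta> \<theta> * Phi (Suc m) (deriv h) \<theta> v)\<bar>
      \<le> D * (indicator angle_dom \<theta> * (\<beta> \<theta> * \<theta>\<^sup>2))"
    using F_bound[OF h1, of 0 "Suc m"] by blast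
  have "((\<lambda>v. \<integral>\<theta>. indicator angle_dom \<theta> * (\<beta> \<theta> * Phi m h \<theta> v) \<partial>lebesgue) has_real_derivative
      (\<integral>\<theta>. indicator angle_dom \<theta> * (\<beta> \<theta> * Phi (Suc m) (deriv h) \<theta> v0) \<partial>lebesgue)) (at v0)"
  proof (rule DERIV_integral[where w="\<lambda>\<theta>. D * (indicator angle_dom \<theta> * (\<beta> \<theta> * \<theta>\<^sup>2))"])
    show "integrable lebesgue (\<lambda>\<theta>. indicator angle_dom \<theta> * (\<beta> \<theta> * Phi m h \<theta> v))" for v
      by (rule F_int[OF h])
    show "(\<lambda>\<theta>. indicator angle_dom \<theta> * (\<beta> \<theta> * Phi (Suc m) (deriv h) \<theta> v)) \<in> borel_measurable lebesgue" for v
      by (rule F_meas[OF h1])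
    show "integrable lebesgue (\<lambda>\<theta>. D * (indicator angle_dom \<theta> * (\<beta> \<theta> * \<theta>\<^sup>2)))"
      using beta_sq_int by (intro integrable_mult_right)
    show "\<bar>indicator angle_dom \<theta> * (\<beta> \<theta> * Phi (Suc m) (deriv h) \<theta> v)\<bar>
        \<le> D * (indicator angle_dom \<theta> * (\<beta> \<theta> * \<theta>\<^sup>2))" for \<theta> v
      using D[of v \<theta>] by simp
    show "((\<lambda>v. indicator angle_dom \<theta> * (\<beta> \<theta> * Phi m h \<theta> v)) has_real_derivative
        indicator angle_dom \<theta> * (\<beta> \<theta> * Phi (Suc m) (deriv h) \<theta> v)) (at v)" for \<theta> v
    proof (cases "\<theta> \<in> angle_dom")
      case True
      show ?thesis
        by (intro DERIV_cmult Phi_DERIV[OF h angle_dom_abs[OF True]])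
    next
      case False
      then show ?thesis by simp
    qed
  qed
  then show ?thesis unfolding T_eq[abs_def] by (simp add: T_eq)
qed

end

context kac
begin

lemma G_int: "integrable lborel G"
  using G_weight_int[of 0] Gc by (metis (no_types, lifting) Bochner_Integration.integrable_bound
      borel_measurable_continuous_onI measurable_lborel2 AE_I2 real_norm_def power_0 mult_1_right abs_abs order_refl)

lemma inner_eq:
  assumes th: "\<theta> \<in> angle_dom" and f: "schwartz f"
  shows "(LINT vs|lebesgue. G (v * sin \<theta> + vs * cos \<theta>) * f (v * cos \<theta> - vs * sin \<theta>) - G vs * f v)
      = Phi 1 f \<theta> v"
proof -
  have tb: "\<bar>\<theta>\<bar> \<le> pi/4" by (rule angle_dom_abs[OF th])
  have cp: "0 < cos \<theta>" using trig_bounds(1)[OF tb] by simp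
  have fc: "continuous_on UNIV f" by (rule schwartz_cont[OF f])
  obtain B where B: "\<And>x. \<bar>f x\<bar> \<le> B" using rapid_bounded[OF schwartz_rapid[OF f, of 0]] by auto
  define F where "F = (\<lambda>y. G y * psi 1 f \<theta> v y + f v * G y)"
  have iF: "integrable lborel F" unfolding F_def
    using Gpsi_int[OF fc B, of 1 \<theta> v] G_int by (intro Bochner_Integration.integrable_add) auto
  have Feq: "F (v * sin \<theta> + cos \<theta> * x) = G (v * sin \<theta> + x * cos \<theta>) * f (v * cos \<theta> - x * sin \<theta>) / cos \<theta>" for x
  proof -
    have "(v - (v * sin \<theta> + cos \<theta> * x) * sin \<theta>) / cos \<theta> = v * cos \<theta> - x * sin \<theta>"
      using cp apply (simp add: field_simps power2_eq_square)
      by (metis distrib_left mult.right_neutral sin_cos_squared_add3)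
    then show ?thesis unfolding F_def psi_def power_one_right
      by (simp only:) (simp add: algebra_simps)
  qed
  have iF2: "integrable lborel (\<lambda>x. F (v * sin \<theta> + cos \<theta> * x))"
    by (rule lborel_integrable_real_affine[OF iF]) (use cp in auto)
  define P where "P = (\<lambda>x. G (v * sin \<theta> + x * cos \<theta>) * f (v * cos \<theta> - x * sin \<theta>))"
  have Pe: "P x = cos \<theta> * F (v * sin \<theta> + cos \<theta> * x)" for x
    unfolding P_def Feq using cp by simp
  have iP: "integrable lborel P"
    unfolding Pe[abs_def] using iF2 by (intro integrable_mult_right)
  have iQ: "integrable lborel (\<lambda>x. G x * f v)" using G_int by simp
  have intF: "(\<integral>y. F y \<partial>lborel) = \<bar>cos \<theta>\<bar> *\<^sub>R (\<integral>x. F (v * sin \<theta> + cos \<theta> * x) \<partial>lborel)"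
    by (rule lborel_integral_real_affine) (use cp in auto)
  have intP: "(\<integral>x. P x \<partial>lborel) = (\<integral>y. F y \<partial>lborel)"
    unfolding intF Pe using cp by simp
  have mP: "(\<lambda>x. P x - G x * f v) \<in> borel_measurable lborel"
    using iP iQ by (intro borel_measurable_diff) auto
  have "(LINT vs|lebesgue. G (v * sin \<theta> + vs * cos \<theta>) * f (v * cos \<theta> - vs * sin \<theta>) - G vs * f v)
      = (\<integral>x. P x - G x * f v \<partial>lborel)"
  proof -
    have "(\<lambda>vs. G (v * sin \<theta> + vs * cos \<theta>) * f (v * cos \<theta> - vs * sin \<theta>) - G vs * f v)
        = (\<lambda>x. P x - G x * f v)" by (simp add: P_def)
    moreover have "(\<integral>x. P x - G x * f v \<partial>lebesgue) = (\<integral>x. P x - G x * f v \<partial>lborel)"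
      by (rule integral_completion) (use mP in simp)
    ultimately show ?thesis by simp
  qed
  also have "\<dots> = (\<integral>x. P x \<partial>lborel) - (\<integral>x. G x * f v \<partial>lborel)"
    using iP iQ by (rule Bochner_Integration.integral_diff)
  also have "\<dots> = (\<integral>y. F y \<partial>lborel) - (\<integral>x. f v * G x \<partial>lborel)" unfolding intP by (simp add: mult.commute)
  also have "(\<integral>y. F y \<partial>lborel) = Phi 1 f \<theta> v + (\<integral>x. f v * G x \<partial>lborel)"
    unfolding F_def Phi_def
    using Gpsi_int[OF fc B, of 1 \<theta> v] G_int by (intro Bochner_Integration.integral_add) auto
  finally show ?thesis by simp
qed

end

theorem lemma4p2:
  fixes s :: real and \<beta> f g :: "real \<Rightarrow> real"
  assumes "0 < s" "s < 1"
    and "cross_section s \<beta>"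
    and "schwartz f" "schwartz g"
  shows "schwartz (kac_K \<beta> g f)"
proof -
  have gr: "rapid g" using schwartz_rapid[OF assms(5), of 0] by simp
  interpret kac s \<beta> "even_part g"
    by unfold_locales (use assms(2,3) even_part_cont[OF schwartz_cont[OF assms(5)]]
        even_part_rapid[OF gr] even_part_even in auto)
  have KT: "kac_K \<beta> g f = T 1 f"
  proof
    fix v
    have "angle_dom \<in> sets lebesgue" unfolding angle_dom_def by simp
    then show "kac_K \<beta> g f v = T 1 f v"
      unfolding kac_K_def T_def
      by (rule set_lebesgue_integral_cong) (simp add: inner_eq[OF _ assms(4)])
  qed
  have D: "(deriv^^n) (T 1 f) = T (Suc n) ((deriv^^n) f)" for n
  proof (induction n)
    case 0 then show ?case by simp
  next
    case (Suc n)
    have sn: "schwartz ((deriv^^n) f)" by (rule schwartz_funpow[OF assms(4)])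
    have "deriv (T (Suc n) ((deriv^^n) f)) = T (Suc (Suc n)) (deriv ((deriv^^n) f))"
      by (rule ext) (rule DERIV_imp_deriv[OF T_DERIV[OF sn]])
    then show ?case using Suc by simp
  qed
  show ?thesis unfolding schwartz_def KT D
  proof (intro conjI allI)
    fix n x
    have sn: "schwartz ((deriv^^n) f)" by (rule schwartz_funpow[OF assms(4)])
    show "T (Suc n) ((deriv^^n) f) differentiable (at x)"
      using T_DERIV[OF sn, of "Suc n" x] real_differentiable_def by blast
  next
    fix k n
    have sn: "schwartz ((deriv^^n) f)" by (rule schwartz_funpow[OF assms(4)])
    show "\<exists>C. \<forall>x. \<bar>x\<bar>^k * \<bar>T (Suc n) ((deriv^^n) f) x\<bar> \<le> C"
      by (rule T_decay[OF sn])
  qed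
qed

end
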